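(* Let $\rho>1$ and let $\mathbf{p}=(p_1,\ldots,p_n)$ be a probability distribution with $p_1\geq p_2\geq\cdots\geq p_n>0$ and $p_1/p_n\leq\rho$. Then $$H(\mathbf{p})\geq \log_2 n-\left(\frac{\rho\ln\rho}{\rho-1}-1-\ln\frac{\rho\ln\rho}{\rho-1}\right)\frac{1}{\ln 2}.$$
   Context: $H(\mathbf{p})=-\sum_i p_i\log_2 p_i$ is the Shannon entropy in bits, and $\ln$ is the natural logarithm. *)

theory Defs
  imports Complex_Main
begin

definition shannon_entropy :: "nat \<Rightarrow> (nat \<Rightarrow> real) \<Rightarrow> real" where
  "shannon_entropy n p = - (\<Sum>i=1..n. p i * log 2 (p i))"

end

theory Submission
  imports Defs "HOL-Analysis.Analysis"
begin

lemma key: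
  fixes \<rho> t :: real
  assumes "\<rho> > 1" "1 \<le> t" "t \<le> \<rho>"
  shows "t * ln t \<le> (t - 1) * (\<rho> * ln \<rho> / (\<rho> - 1))"
proof -
  have cvx: "convex_on {0<..} (\<lambda>x::real. x * ln x)"
  proof (rule convex_on_realI[where f'="\<lambda>x. ln x + 1"])
    show "connected ({0<..} :: real set)" by (simp add: is_interval_connected)
    fix x :: real assume "x \<in> {0<..}"
    then show "((\<lambda>x. x * ln x) has_real_derivative ln x + 1) (at x)"
      by (auto intro!: derivative_eq_intros)
  next
    fix x y :: real assume "x \<in> {0<..}" "y \<in> {0<..}" "x \<le> y"
    then show "ln x + 1 \<le> ln y + 1" by simp
  qed
  define l where "l = (t - 1) / (\<rho> - 1)"
  have l0: "l \<ge> 0" "l \<le> 1" using assms by (auto simp: l_def field_simps)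
  have le: "l * (\<rho> - 1) = t - 1" using assms by (simp add: l_def)
  have eq: "(1 - l) *\<^sub>R 1 + l *\<^sub>R \<rho> = t" using le by (simp add: algebra_simps)
  have "(\<lambda>x::real. x * ln x) ((1 - l) *\<^sub>R 1 + l *\<^sub>R \<rho>) \<le> (1 - l) * (1 * ln 1) + l * (\<rho> * ln \<rho>)"
    by (rule convex_onD[OF cvx]) (use l0 assms in auto)
  then have "t * ln t \<le> l * (\<rho> * ln \<rho>)" using eq by simp
  then show ?thesis by (simp add: l_def)
qed

theorem theorem2:
  fixes \<rho> :: real and n :: nat and p :: "nat \<Rightarrow> real"
  assumes "\<rho> > 1"
    and "n \<ge> 1"
    and "(\<Sum>i=1..n. p i) = 1"
    and "\<And>i j. 1 \<le> i \<Longrightarrow> i \<le> j \<Longrightarrow> j \<le> n \<Longrightarrow> p j \<le> p i"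
    and "p n > 0"
    and "p 1 / p n \<le> \<rho>"
  shows "shannon_entropy n p \<ge> log 2 n
    - ((\<rho> * ln \<rho> / (\<rho> - 1)) - 1 - ln (\<rho> * ln \<rho> / (\<rho> - 1))) * (1 / ln 2)"
proof -
  define c where "c = \<rho> * ln \<rho> / (\<rho> - 1)"
  define m where "m = p n"
  have m0: "m > 0" using assms(5) by (simp add: m_def)
  have c0: "c > 0" using assms(1) by (simp add: c_def)
  have p1: "p 1 \<le> \<rho> * m" using assms(6) m0 by (simp add: m_def field_simps)
  have bnd: "p i \<ge> m \<and> p i \<le> \<rho> * m" if "i \<in> {1..n}" for i
  proof -
    have "p n \<le> p i" using assms(4)[of i n] that by auto
    moreover have "p i \<le> p 1" using assms(4)[of 1 i] that by auto
    ultimately show ?thesis using p1 by (simp add: m_def)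
  qed
  have pos: "p i > 0" if "i \<in> {1..n}" for i using bnd[OF that] m0 by linarith
  have pt: "p i * ln (n * p i) \<le> p i * ln (n * m) + (p i - m) * c" if "i \<in> {1..n}" for i
  proof -
    define t where "t = p i / m"
    have t1: "1 \<le> t" "t \<le> \<rho>" using bnd[OF that] m0 by (auto simp: t_def field_simps)
    have "t * ln t \<le> (t - 1) * c" using key[OF assms(1) t1] by (simp add: c_def)
    then have "m * (t * ln t) \<le> m * ((t - 1) * c)" using m0 by simp
    moreover have "ln (n * p i) = ln (n * m) + ln t"
      using m0 pos[OF that] assms(2) by (simp add: t_def ln_mult ln_div)
    moreover have "p i = m * t" using m0 by (simp add: t_def)
    ultimately show ?thesis by (simp add: algebra_simps)
  qed
  have "(\<Sum>i=1..n. p i * ln (n * p i)) \<le> (\<Sum>i=1..n. p i * ln (n * m) + (p i - m) * c)"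
    by (rule sum_mono) (rule pt)
  also have "\<dots> = ln (n * m) + (1 - n * m) * c"
    using assms(3) by (simp add: sum.distrib sum_distrib_right[symmetric] sum_distrib_left[symmetric] sum_subtractf algebra_simps)
  also have "\<dots> \<le> c - 1 - ln c"
  proof -
    have "ln (n * m * c) \<le> n * m * c - 1" using m0 c0 assms(2) by (intro ln_le_minus_one) simp
    moreover have "ln (n * m * c) = ln (n * m) + ln c" using m0 c0 assms(2) by (simp add: ln_mult)
    ultimately show ?thesis by (simp add: algebra_simps)
  qed
  finally have S: "(\<Sum>i=1..n. p i * ln (n * p i)) \<le> c - 1 - ln c" .
  have "(\<Sum>i=1..n. p i * ln (n * p i)) = (\<Sum>i=1..n. p i * ln n + p i * ln (p i))"
    using pos assms(2) by (intro sum.cong) (auto simp: ln_mult algebra_simps)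
  also have "\<dots> = ln n + (\<Sum>i=1..n. p i * ln (p i))"
    using assms(3) by (simp add: sum.distrib sum_distrib_right[symmetric])
  finally have S2: "ln n + (\<Sum>i=1..n. p i * ln (p i)) \<le> c - 1 - ln c" using S by simp
  have H: "shannon_entropy n p = - (\<Sum>i=1..n. p i * ln (p i)) / ln 2"
    unfolding shannon_entropy_def log_def by (simp add: sum_divide_distrib[symmetric])
  have L: "log 2 n = ln n / ln 2" by (simp add: log_def)
  have "ln n - (c - 1 - ln c) \<le> - (\<Sum>i=1..n. p i * ln (p i))" using S2 by linarith
  then have "(ln n - (c - 1 - ln c)) / ln 2 \<le> - (\<Sum>i=1..n. p i * ln (p i)) / ln 2"
    by (rule divide_right_mono) simp
  then show ?thesis unfolding H L c_def[symmetric] by (simp add: diff_divide_distrib)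
qed

end
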